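(* Let $AP$ be a finite set, $p\in AP$, and let $\mathcal{A}=(2^{AP},Q,\delta,q_0,H,H_\exists,\Omega)$ be an HFTA that is nondeterministic in one path, with $Q_\ell$ the existential component containing $q_0$. Let $\exists^{C}p.\mathcal{A}=(2^{AP\setminus\{p\}},Q,\delta',q_0,H,H_\exists,\Omega)$, where for $q\in Q$ and $a\subseteq AP\setminus\{p\}$, $\delta'(q,a)=\delta(q,a)$ if $q\notin Q_\ell$ and $\delta'(q,a)=\delta(q,a)\vee\delta(q,a\cup\{p\})$ if $q\in Q_\ell$. Then $\mathcal{L}(\exists^{C}p.\mathcal{A})=\exists^{C}p.\mathcal{L}(\mathcal{A})$.
   Context: Trees: for a nonempty set $D$, a tree is a nonempty prefix-closed $T\subseteq D^*$ with root $\varepsilon$; children of $w$ are nodes $w\cdot d\in T$; non-blocking: every node has a child; an infinite path from the root is a sequence $\pi(0)\pi(1)\cdots$ with $\pi(0)=\varepsilon$ and $\pi(k+1)$ a child of $\pi(k)$. A Kripke tree over $AP$ is a non-blocking tree with $\mathit{Lab}:T\to2^{AP}$. Chain projection: for a set $L$ of Kripke trees over $AP$ and $p\in AP$, $\exists^{C}p.L$ is the set of Kripke trees $(T,\mathit{Lab})$ over $AP\setminus\{p\}$ for which there are an infinite path $\pi$ of $T$ from the root and a Kripke tree $(T,\mathit{Lab}')\in L$ such that $\mathit{Lab}'(w)=\mathit{Lab}(w)$ for nodes $w$ not on $\pi$ and $\mathit{Lab}'(w)\setminus\{p\}=\mathit{Lab}(w)$ for nodes $w$ on $\pi$. First-order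 one-step logic: for finite $Q$, a one-step interpretation is $(S,I)$, $S\neq\emptyset$, $I:S\to2^Q$; first-order $Q$-constraints are sentences of $\theta::=\top\mid\bot\mid q(x)\mid x=y\mid x\neq y\mid\theta\vee\theta\mid\theta\wedge\theta\mid\exists x.\theta\mid\forall x.\theta$ interpreted over $S$ with $q(x)$ true iff $q\in I(x)$. A $Q$-type is a set $A\subseteq Q$, with $t(A)(x):=\bigwedge_{q\in A}q(x)$ ($\top$ if $A=\emptyset$). For sets $T_\exists=\{A_1,\dots,A_n\}$ and $T_\forall$ of $Q$-types, the basic formula $\theta^{=}(T_\exists,T_\forall)$ is $\exists x_1\dots\exists x_n.(\mathrm{diff}(x_1,\dots,x_n)\wedge\bigwedge_{i=1}^n t(A_i)(x_i)\wedge\forall y.(\mathrm{diff}(x_1,\dots,x_n,y)\to\bigvee_{A\in T_\forall}t(A)(y)))$, where $\mathrm{diff}(z_1,\dots,z_k):=\bigwedge_{i\neq j}z_i\neq z_j$. For nonempty $Q'\subseteq Q$, $\theta^{=}(T_\exists,T_\forall)$ is $Q'$-functional in one direction if some $A\in T_\exists$ is a singleton $\{q\}$ with $q\in Q'$ and every $B\in(T_\exists\setminus\{A\})\cup T_\forall$ is disjoint from $Q'$; a first-order $Q$-constraint is $Q'$-functional in one direction if it is a disjunction of basic formulas that are. FTA $(\Sigma,Q,\delta,q_0,\Omega)$: $\delta$ maps $Q\times\Sigma$ to first-order $Q$-constraints. A run on a non-blocking $\Sigma$-labelled tree $(T,\mathit{Lab})$ is a $(Q\times T)$-labelled tree $(T_r,\mathit{Lab}_r)$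 with $\mathit{Lab}_r(\varepsilon)=(q_0,\varepsilon)$ in which each node $y$ with $\mathit{Lab}_r(y)=(q,w)$ has children whose labels are exactly $\{(q',w'):w'\in S_w,q'\in I(w')\}$ for some $(S_w,I)\models\delta(q,\mathit{Lab}(w))$, $S_w$ the children of $w$; a node $y$ reads $w$ if $\mathit{Lab}_r(y)=(q,w)$ for some $q$. It is accepting if along every infinite path from the root of $T_r$ the highest colour seen infinitely often is even; $\mathcal{L}$ is the set of trees with an accepting run. HFTA $(\Sigma,Q,\delta,q_0,H,H_\exists,\Omega)$: FTA with ordered partition $H=\langle Q_1,\dots,Q_n\rangle$ of $Q$ (order of $Q_i$ is $i$), each component existential (those in $H_\exists$), universal or transient: transient $Q_i$: $\delta(q,a)$ mentions only states of order $<i$; existential $Q_i$: $\delta(q,a)$ is a disjunction of $\exists x.(q'(x)\wedge\theta(x))$, $q'\in Q_i$, $\theta(x)$ mentioning only states of order $<i$; universal $Q_i$: conjunction of $\forall x.(q'(x)\vee\theta(x))$ likewise; $\Omega$ on an existential (universal) component has values in $\{m-1,m\}$, $m$ even (odd). An HFTA is nondeterministic in one path if $q_0$ lies in an existential component $Q_\ell$ and (1) for all $q\in Q_\ell$, $a\in\Sigma$, $\delta(q,a)$ is $Q_\ell$-functional in one direction; (2) for every $\mathcal{T}\in\mathcal{L}(\mathcal{A})$ and every infinite path $\pi$ of $\mathcal{T}$ from the root, there is an accepting run such that for each node $w$ on $\pi$ exactly one node of the run reads $w$, and its state belongs to $Q_\ell$. *)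

theory Defs
  imports Main
begin

definition is_tree :: "'d list set \<Rightarrow> bool" where
  "is_tree T \<longleftrightarrow> T \<noteq> {} \<and> (\<forall>w v. w @ v \<in> T \<longrightarrow> w \<in> T)"

definition children :: "'d list set \<Rightarrow> 'd list \<Rightarrow> 'd list set" where
  "children T w = {w @ [d] | d. w @ [d] \<in> T}"

definition non_blocking :: "'d list set \<Rightarrow> bool" where
  "non_blocking T \<longleftrightarrow> is_tree T \<and> (\<forall>w\<in>T. children T w \<noteq> {})"

definition inf_path :: "'d list set \<Rightarrow> (nat \<Rightarrow> 'd list) \<Rightarrow> bool" where
  "inf_path T \<pi> \<longleftrightarrow> \<pi> 0 = [] \<and> (\<forall>k. \<pi> (Suc k) \<in> children T (\<pi> k))"

text \<open>A Kripke tree over AP is a pair (T, Lab); only the values of Lab on T matter.\<close>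
definition kripke_tree :: "'ap set \<Rightarrow> 'd list set \<Rightarrow> ('d list \<Rightarrow> 'ap set) \<Rightarrow> bool" where
  "kripke_tree AP T Lab \<longleftrightarrow> non_blocking T \<and> (\<forall>w\<in>T. Lab w \<subseteq> AP)"

definition chain_proj ::
  "'ap set \<Rightarrow> 'ap \<Rightarrow> ('d list set \<times> ('d list \<Rightarrow> 'ap set)) set
     \<Rightarrow> ('d list set \<times> ('d list \<Rightarrow> 'ap set)) set" where
  "chain_proj AP p L = {(T, Lab). kripke_tree (AP - {p}) T Lab \<and>
     (\<exists>\<pi> Lab'. inf_path T \<pi> \<and> (T, Lab') \<in> L \<and>
        (\<forall>w\<in>T. w \<notin> range \<pi> \<longrightarrow> Lab' w = Lab w) \<and>
        (\<forall>w\<in>T. w \<in> range \<pi> \<longrightarrow> Lab' w - {p} = Lab w))}"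

datatype 'q fo = Top | Bot | Atom 'q nat | Eq nat nat | Neq nat nat
  | Or "'q fo" "'q fo" | And "'q fo" "'q fo" | Ex nat "'q fo" | All nat "'q fo"

fun sat :: "'s set \<Rightarrow> ('s \<Rightarrow> 'q set) \<Rightarrow> (nat \<Rightarrow> 's) \<Rightarrow> 'q fo \<Rightarrow> bool" where
  "sat S I e Top = True"
| "sat S I e Bot = False"
| "sat S I e (Atom q x) = (q \<in> I (e x))"
| "sat S I e (Eq x y) = (e x = e y)"
| "sat S I e (Neq x y) = (e x \<noteq> e y)"
| "sat S I e (Or \<phi> \<psi>) = (sat S I e \<phi> \<or> sat S I e \<psi>)"
| "sat S I e (And \<phi> \<psi>) = (sat S I e \<phi> \<and> sat S I e \<psi>)"
| "sat S I e (Ex x \<phi>) = (\<exists>s\<in>S. sat S I (e(x := s)) \<phi>)"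
| "sat S I e (All x \<phi>) = (\<forall>s\<in>S. sat S I (e(x := s)) \<phi>)"

fun fv :: "'q fo \<Rightarrow> nat set" where
  "fv Top = {}" | "fv Bot = {}" | "fv (Atom q x) = {x}" | "fv (Eq x y) = {x, y}"
| "fv (Neq x y) = {x, y}" | "fv (Or \<phi> \<psi>) = fv \<phi> \<union> fv \<psi>" | "fv (And \<phi> \<psi>) = fv \<phi> \<union> fv \<psi>"
| "fv (Ex x \<phi>) = fv \<phi> - {x}" | "fv (All x \<phi>) = fv \<phi> - {x}"

fun atoms :: "'q fo \<Rightarrow> 'q set" where
  "atoms Top = {}" | "atoms Bot = {}" | "atoms (Atom q x) = {q}" | "atoms (Eq x y) = {}"
| "atoms (Neq x y) = {}" | "atoms (Or \<phi> \<psi>) = atoms \<phi> \<union> atoms \<psi>"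
| "atoms (And \<phi> \<psi>) = atoms \<phi> \<union> atoms \<psi>"
| "atoms (Ex x \<phi>) = atoms \<phi>" | "atoms (All x \<phi>) = atoms \<phi>"

definition models :: "'s set \<Rightarrow> ('s \<Rightarrow> 'q set) \<Rightarrow> 'q fo \<Rightarrow> bool" where
  "models S I \<phi> \<longleftrightarrow> S \<noteq> {} \<and> (\<forall>e. (\<forall>x. e x \<in> S) \<longrightarrow> sat S I e \<phi>)"

text \<open>Logical equivalence of sentences (over all one-step interpretations with
  domains of natural numbers, which suffices for this monadic logic).\<close>
definition fo_equiv :: "'q fo \<Rightarrow> 'q fo \<Rightarrow> bool" where
  "fo_equiv \<phi> \<psi> \<longleftrightarrow> (\<forall>(S::nat set) I. S \<noteq> {} \<longrightarrow> (models S I \<phi> \<longleftrightarrow> models S I \<psi>))"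

fun big_and :: "'q fo list \<Rightarrow> 'q fo" where
  "big_and [] = Top" | "big_and [\<phi>] = \<phi>" | "big_and (\<phi> # \<psi>s) = And \<phi> (big_and \<psi>s)"

fun big_or :: "'q fo list \<Rightarrow> 'q fo" where
  "big_or [] = Bot" | "big_or [\<phi>] = \<phi>" | "big_or (\<phi> # \<psi>s) = Or \<phi> (big_or \<psi>s)"

definition type_fo :: "'q set \<Rightarrow> nat \<Rightarrow> 'q fo" where
  "type_fo A x = big_and (map (\<lambda>q. Atom q x) (SOME qs. set qs = A \<and> distinct qs))"

definition diff_fo :: "nat list \<Rightarrow> 'q fo" where
  "diff_fo zs = big_and [Neq (zs ! i) (zs ! j). i \<leftarrow> [0..<length zs], j \<leftarrow> [0..<length zs], i \<noteq> j]"

text \<open>The basic formula theta^=(T_ex, T_all), with T_ex = {A_1,...,A_n} enumerated as the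
  list Te; x_i is variable i-1 and y is variable n.  The implication
  diff(x_1..x_n,y) --> phi is written as (y = x_1 \/ ... \/ y = x_n \/ phi).\<close>
definition basic_fo :: "'q set list \<Rightarrow> 'q set list \<Rightarrow> 'q fo" where
  "basic_fo Te Tf = (let n = length Te in
     foldr Ex [0..<n]
       (big_and [diff_fo [0..<n],
                 big_and [type_fo (Te ! i) i. i \<leftarrow> [0..<n]],
                 All n (big_or ([Eq n i. i \<leftarrow> [0..<n]] @ [big_or [type_fo A n. A \<leftarrow> Tf]]))]))"

definition basic_functional :: "'q set \<Rightarrow> 'q set \<Rightarrow> 'q set list \<Rightarrow> 'q set list \<Rightarrow> bool" where
  "basic_functional Q Q' Te Tf \<longleftrightarrow> distinct Te \<and> (\<forall>A \<in> set Te \<union> set Tf. A \<subseteq> Q) \<and>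
     (\<exists>A \<in> set Te. \<exists>q \<in> Q'. A = {q} \<and>
        (\<forall>B \<in> (set Te - {A}) \<union> set Tf. B \<inter> Q' = {}))"

definition functional_one_dir :: "'q set \<Rightarrow> 'q set \<Rightarrow> 'q fo \<Rightarrow> bool" where
  "functional_one_dir Q Q' \<theta> \<longleftrightarrow> Q' \<noteq> {} \<and> Q' \<subseteq> Q \<and>
     (\<exists>bs. bs \<noteq> [] \<and> (\<forall>(Te, Tf) \<in> set bs. basic_functional Q Q' Te Tf) \<and>
        fo_equiv \<theta> (big_or (map (\<lambda>(Te, Tf). basic_fo Te Tf) bs)))"

inductive is_disj :: "('q fo \<Rightarrow> bool) \<Rightarrow> 'q fo \<Rightarrow> bool" for P where
  "P \<phi> \<Longrightarrow> is_disj P \<phi>"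
| "is_disj P \<phi> \<Longrightarrow> is_disj P \<psi> \<Longrightarrow> is_disj P (Or \<phi> \<psi>)"

inductive is_conj :: "('q fo \<Rightarrow> bool) \<Rightarrow> 'q fo \<Rightarrow> bool" for P where
  "P \<phi> \<Longrightarrow> is_conj P \<phi>"
| "is_conj P \<phi> \<Longrightarrow> is_conj P \<psi> \<Longrightarrow> is_conj P (And \<phi> \<psi>)"

record ('a, 'q) fta =
  alph :: "'a set"
  states :: "'q set"
  delta :: "'q \<Rightarrow> 'a \<Rightarrow> 'q fo"
  init :: 'q
  colour :: "'q \<Rightarrow> nat"

definition wf_fta :: "('a, 'q, 'z) fta_scheme \<Rightarrow> bool" where
  "wf_fta A \<longleftrightarrow> finite (states A) \<and> init A \<in> states A \<and>
     (\<forall>q\<in>states A. \<forall>a\<in>alph A. fv (delta A q a) = {} \<and> atoms (delta A q a) \<subseteq> states A)"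

definition is_run :: "('a, 'q, 'z) fta_scheme \<Rightarrow> 'd list set \<Rightarrow> ('d list \<Rightarrow> 'a)
     \<Rightarrow> ('q \<times> 'd) list set \<Rightarrow> (('q \<times> 'd) list \<Rightarrow> 'q \<times> 'd list) \<Rightarrow> bool" where
  "is_run A T Lab Tr Lr \<longleftrightarrow> is_tree Tr \<and> Lr [] = (init A, []) \<and>
     (\<forall>y\<in>Tr. Lr y \<in> states A \<times> T \<and>
        (\<exists>I. (\<forall>w'\<in>children T (snd (Lr y)). I w' \<subseteq> states A) \<and>
             models (children T (snd (Lr y))) I (delta A (fst (Lr y)) (Lab (snd (Lr y)))) \<and>
             Lr ` children Tr y = {(q', w'). w' \<in> children T (snd (Lr y)) \<and> q' \<in> I w'}))"

definition accepting_run :: "('a, 'q, 'z) fta_scheme \<Rightarrow> 'd list set \<Rightarrow> ('d list \<Rightarrow> 'a)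
     \<Rightarrow> ('q \<times> 'd) list set \<Rightarrow> (('q \<times> 'd) list \<Rightarrow> 'q \<times> 'd list) \<Rightarrow> bool" where
  "accepting_run A T Lab Tr Lr \<longleftrightarrow> is_run A T Lab Tr Lr \<and>
     (\<forall>\<pi>. inf_path Tr \<pi> \<longrightarrow>
        even (Max {c. infinite {k. colour A (fst (Lr (\<pi> k))) = c}}))"

definition lang :: "('a, 'q, 'z) fta_scheme \<Rightarrow> ('d list set \<times> ('d list \<Rightarrow> 'a)) set" where
  "lang A = {(T, Lab). non_blocking T \<and> (\<forall>w\<in>T. Lab w \<in> alph A) \<and>
     (\<exists>Tr Lr. accepting_run A T Lab Tr Lr)}"

text \<open>Hierarchical FTA: an FTA with an ordered partition (list of components, the order of
  component i is its index) and the set of existential components.\<close>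
record ('a, 'q) hfta = "('a, 'q) fta" +
  parts :: "'q set list"
  ex_parts :: "'q set set"

definition lower :: "('a, 'q, 'z) hfta_scheme \<Rightarrow> nat \<Rightarrow> 'q set" where
  "lower A i = (\<Union>j<i. parts A ! j)"

definition existential_comp :: "('a, 'q, 'z) hfta_scheme \<Rightarrow> nat \<Rightarrow> bool" where
  "existential_comp A i \<longleftrightarrow>
     (\<forall>q\<in>parts A ! i. \<forall>a\<in>alph A. is_disj (\<lambda>\<phi>. \<exists>x q' \<theta>. \<phi> = Ex x (And (Atom q' x) \<theta>) \<and>
         q' \<in> parts A ! i \<and> atoms \<theta> \<subseteq> lower A i) (delta A q a)) \<and>
     (\<exists>m. even m \<and> (\<forall>q\<in>parts A ! i. colour A q \<in> {m - 1, m}))"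

definition universal_comp :: "('a, 'q, 'z) hfta_scheme \<Rightarrow> nat \<Rightarrow> bool" where
  "universal_comp A i \<longleftrightarrow>
     (\<forall>q\<in>parts A ! i. \<forall>a\<in>alph A. is_conj (\<lambda>\<phi>. \<exists>x q' \<theta>. \<phi> = All x (Or (Atom q' x) \<theta>) \<and>
         q' \<in> parts A ! i \<and> atoms \<theta> \<subseteq> lower A i) (delta A q a)) \<and>
     (\<exists>m. odd m \<and> (\<forall>q\<in>parts A ! i. colour A q \<in> {m - 1, m}))"

definition transient_comp :: "('a, 'q, 'z) hfta_scheme \<Rightarrow> nat \<Rightarrow> bool" where
  "transient_comp A i \<longleftrightarrow> (\<forall>q\<in>parts A ! i. \<forall>a\<in>alph A. atoms (delta A q a) \<subseteq> lower A i)"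

definition is_hfta :: "('a, 'q, 'z) hfta_scheme \<Rightarrow> bool" where
  "is_hfta A \<longleftrightarrow> wf_fta A \<and>
     (\<forall>i<length (parts A). parts A ! i \<noteq> {}) \<and>
     (\<forall>i<length (parts A). \<forall>j<length (parts A). i \<noteq> j \<longrightarrow> parts A ! i \<inter> parts A ! j = {}) \<and>
     \<Union>(set (parts A)) = states A \<and>
     ex_parts A \<subseteq> set (parts A) \<and>
     (\<forall>i<length (parts A).
        (parts A ! i \<in> ex_parts A \<longrightarrow> existential_comp A i) \<and>
        (parts A ! i \<notin> ex_parts A \<longrightarrow> universal_comp A i \<or> transient_comp A i))"

text \<open>Nondeterministic in one path, where Q_l = parts A ! l is the existential component
  containing the initial state.  Condition (2) is stated for trees with directions 'd.\<close>
definition nondet_one_path :: "('a, 'q, 'z) hfta_scheme \<Rightarrow> nat \<Rightarrow> 'd itself \<Rightarrow> bool" where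
  "nondet_one_path A l _ \<longleftrightarrow> is_hfta A \<and> l < length (parts A) \<and>
     init A \<in> parts A ! l \<and> parts A ! l \<in> ex_parts A \<and>
     (\<forall>q\<in>parts A ! l. \<forall>a\<in>alph A. functional_one_dir (states A) (parts A ! l) (delta A q a)) \<and>
     (\<forall>(T::'d list set) Lab. (T, Lab) \<in> lang A \<longrightarrow> (\<forall>\<pi>. inf_path T \<pi> \<longrightarrow>
        (\<exists>Tr Lr. accepting_run A T Lab Tr Lr \<and>
           (\<forall>k. (\<exists>!y. y \<in> Tr \<and> snd (Lr y) = \<pi> k) \<and>
                (\<forall>y\<in>Tr. snd (Lr y) = \<pi> k \<longrightarrow> fst (Lr y) \<in> parts A ! l)))))"

definition exC_aut :: "'ap set \<Rightarrow> 'ap \<Rightarrow> 'q set \<Rightarrow> ('ap set, 'q) hfta \<Rightarrow> ('ap set, 'q) hfta" where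
  "exC_aut AP p Ql A = A\<lparr>alph := Pow (AP - {p}),
      delta := (\<lambda>q a. if q \<in> Ql then Or (delta A q a) (delta A q (insert p a)) else delta A q a)\<rparr>"

end

theory Submission
  imports Defs
begin

fun vars :: "'q fo \<Rightarrow> nat set" where
  "vars Top = {}" | "vars Bot = {}" | "vars (Atom q x) = {x}" | "vars (Eq x y) = {x, y}"
| "vars (Neq x y) = {x, y}" | "vars (Or \<phi> \<psi>) = vars \<phi> \<union> vars \<psi>" | "vars (And \<phi> \<psi>) = vars \<phi> \<union> vars \<psi>"
| "vars (Ex x \<phi>) = insert x (vars \<phi>)" | "vars (All x \<phi>) = insert x (vars \<phi>)"

lemma fv_vars: "fv \<phi> \<subseteq> vars \<phi>"
  by (induction \<phi>) auto

lemma finite_vars: "finite (vars \<phi>)"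
  by (induction \<phi>) auto

lemma sat_fv: "(\<forall>x\<in>fv \<phi>. e x = e' x) \<Longrightarrow> sat S I e \<phi> = sat S I e' \<phi>"
proof (induction \<phi> arbitrary: e e')
  case (Or \<phi>1 \<phi>2)
  have "sat S I e \<phi>1 = sat S I e' \<phi>1" by (rule Or.IH(1)) (use Or.prems in auto)
  moreover have "sat S I e \<phi>2 = sat S I e' \<phi>2" by (rule Or.IH(2)) (use Or.prems in auto)
  ultimately show ?case by simp
next
  case (And \<phi>1 \<phi>2)
  have "sat S I e \<phi>1 = sat S I e' \<phi>1" by (rule And.IH(1)) (use And.prems in auto)
  moreover have "sat S I e \<phi>2 = sat S I e' \<phi>2" by (rule And.IH(2)) (use And.prems in auto)
  ultimately show ?case by simp
next
  case (Ex x \<phi>)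
  have "\<And>s. sat S I (e(x:=s)) \<phi> = sat S I (e'(x:=s)) \<phi>"
    by (rule Ex.IH) (use Ex.prems in auto)
  then show ?case by simp
next
  case (All x \<phi>)
  have "\<And>s. sat S I (e(x:=s)) \<phi> = sat S I (e'(x:=s)) \<phi>"
    by (rule All.IH) (use All.prems in auto)
  then show ?case by simp
qed auto

lemma sat_atoms: "(\<forall>q\<in>atoms \<phi>. \<forall>s\<in>S. q \<in> I s \<longleftrightarrow> q \<in> I' s) \<Longrightarrow> (\<forall>x. e x \<in> S)
  \<Longrightarrow> sat S I e \<phi> = sat S I' e \<phi>"
proof (induction \<phi> arbitrary: e)
  case (Ex x \<phi>)
  have "\<And>s. s \<in> S \<Longrightarrow> sat S I (e(x:=s)) \<phi> = sat S I' (e(x:=s)) \<phi>"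
    by (rule Ex.IH) (use Ex.prems in auto)
  then show ?case by simp
next
  case (All x \<phi>)
  have "\<And>s. s \<in> S \<Longrightarrow> sat S I (e(x:=s)) \<phi> = sat S I' (e(x:=s)) \<phi>"
    by (rule All.IH) (use All.prems in auto)
  then show ?case by simp
qed auto

lemma sat_bij: "inj_on g S \<Longrightarrow> g ` S = S' \<Longrightarrow> (\<forall>s\<in>S. I' (g s) = I s) \<Longrightarrow> (\<forall>x. e x \<in> S)
  \<Longrightarrow> sat S' I' (g \<circ> e) \<phi> = sat S I e \<phi>"
proof (induction \<phi> arbitrary: e)
  case (Eq x y)
  then show ?case by (auto dest: inj_onD)
next
  case (Neq x y)
  then show ?case by (auto dest: inj_onD)
next
  case (Ex x \<phi>)
  have IH: "\<And>s. s \<in> S \<Longrightarrow> sat S' I' (g \<circ> e(x:=s)) \<phi> = sat S I (e(x:=s)) \<phi>"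
    by (rule Ex.IH) (use Ex.prems in auto)
  have eq: "\<And>s. (g \<circ> e)(x := g s) = g \<circ> e(x:=s)" by auto
  have "sat S' I' (g \<circ> e) (Ex x \<phi>) = (\<exists> s\<in>S. sat S' I' ((g \<circ> e)(x := g s)) \<phi>)"
    using Ex.prems(2) by auto
  also have "\<dots> = (\<exists> s\<in>S. sat S I (e(x:=s)) \<phi>)"
    unfolding eq using IH by auto
  finally show ?case by (simp only: sat.simps)
next
  case (All x \<phi>)
  have IH: "\<And>s. s \<in> S \<Longrightarrow> sat S' I' (g \<circ> e(x:=s)) \<phi> = sat S I (e(x:=s)) \<phi>"
    by (rule All.IH) (use All.prems in auto)
  have eq: "\<And>s. (g \<circ> e)(x := g s) = g \<circ> e(x:=s)" by auto
  have "sat S' I' (g \<circ> e) (All x \<phi>) = (\<forall> s\<in>S. sat S' I' ((g \<circ> e)(x := g s)) \<phi>)"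
    using All.prems(2) by auto
  also have "\<dots> = (\<forall> s\<in>S. sat S I (e(x:=s)) \<phi>)"
    unfolding eq using IH by auto
  finally show ?case by (simp only: sat.simps)
qed auto

definition swp :: "'s \<Rightarrow> 's \<Rightarrow> 's \<Rightarrow> 's" where
  "swp a b t = (if t = a then b else if t = b then a else t)"

lemma swp_inj: "inj_on (swp a b) S"
  by (auto simp: swp_def inj_on_def)

lemma swp_img: "a \<in> S \<Longrightarrow> b \<in> S \<Longrightarrow> swp a b ` S = S"
  by (auto simp: swp_def image_def)

lemma swap_step:
  assumes sS: "s \<in> S" and s0S: "s0 \<in> S" and Is: "I s0 = I s"
    and e: "\<forall>y. e y \<in> S" and fvW: "fv \<phi> \<subseteq> W"
    and ns: "\<forall>y\<in>W - {x}. e y \<noteq> s \<and> e y \<noteq> s0"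
  shows "sat S I (e(x:=s)) \<phi> = sat S I (e(x:=s0)) \<phi>"
proof -
  have "sat S I (swp s s0 \<circ> e(x:=s0)) \<phi> = sat S I (e(x:=s0)) \<phi>"
    apply (rule sat_bij[OF swp_inj swp_img[OF sS s0S]])
    using Is e s0S by (auto simp: swp_def)
  moreover have "sat S I (swp s s0 \<circ> e(x:=s0)) \<phi> = sat S I (e(x:=s)) \<phi>"
    apply (rule sat_fv)
    using ns fvW by (auto simp: swp_def)
  ultimately show ?thesis by simp
qed

lemma sat_subset:
  assumes S0: "S0 \<subseteq> S" "finite S0" and W: "finite W"
    and big: "\<forall>s\<in>S - S0. card W < card {t\<in>S0. I t = I s}"
  shows "vars \<phi> \<subseteq> W \<Longrightarrow> (\<forall>x. e x \<in> S0) \<Longrightarrow> sat S I e \<phi> = sat S0 I e \<phi>"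
proof (induction \<phi> arbitrary: e)
  case (Ex x \<phi>)
  have IH: "\<And>s. s \<in> S0 \<Longrightarrow> sat S I (e(x:=s)) \<phi> = sat S0 I (e(x:=s)) \<phi>"
    by (rule Ex.IH) (use Ex.prems in auto)
  have rep: "\<exists>s0\<in>S0. sat S I (e(x:=s)) \<phi> = sat S I (e(x:=s0)) \<phi>" if sS: "s \<in> S" for s
  proof (cases "s \<in> S0")
    case True then show ?thesis by auto
  next
    case False
    have "card W < card {t\<in>S0. I t = I s}" using big False sS by blast
    then have "card (e ` W) < card {t\<in>S0. I t = I s}"
      using card_image_le[OF W, of e] by linarith
    then obtain s0 where s0: "s0 \<in> {t\<in>S0. I t = I s}" "s0 \<notin> e ` W"
      by (metis (no_types, lifting) card_mono finite_imageI not_le subsetI W)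
    have "sat S I (e(x:=s)) \<phi> = sat S I (e(x:=s0)) \<phi>"
      apply (rule swap_step[where W=W])
      using sS s0 S0 Ex.prems False fv_vars[of \<phi>] by auto
    then show ?thesis using s0 by auto
  qed
  show ?case
  proof
    assume "sat S I e (Ex x \<phi>)"
    then obtain s where "s \<in> S" "sat S I (e(x:=s)) \<phi>" by auto
    then obtain s0 where "s0 \<in> S0" "sat S I (e(x:=s0)) \<phi>" using rep by blast
    then show "sat S0 I e (Ex x \<phi>)" using IH by auto
  next
    assume "sat S0 I e (Ex x \<phi>)"
    then show "sat S I e (Ex x \<phi>)" using IH S0 by auto
  qed
next
  case (All x \<phi>)
  have IH: "\<And>s. s \<in> S0 \<Longrightarrow> sat S I (e(x:=s)) \<phi> = sat S0 I (e(x:=s)) \<phi>"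
    by (rule All.IH) (use All.prems in auto)
  have rep: "\<exists>s0\<in>S0. sat S I (e(x:=s)) \<phi> = sat S I (e(x:=s0)) \<phi>" if sS: "s \<in> S" for s
  proof (cases "s \<in> S0")
    case True then show ?thesis by auto
  next
    case False
    have "card W < card {t\<in>S0. I t = I s}" using big False sS by blast
    then have "card (e ` W) < card {t\<in>S0. I t = I s}"
      using card_image_le[OF W, of e] by linarith
    then obtain s0 where s0: "s0 \<in> {t\<in>S0. I t = I s}" "s0 \<notin> e ` W"
      by (metis (no_types, lifting) card_mono finite_imageI not_le subsetI W)
    have "sat S I (e(x:=s)) \<phi> = sat S I (e(x:=s0)) \<phi>"
      apply (rule swap_step[where W=W])
      using sS s0 S0 All.prems False fv_vars[of \<phi>] by auto
    then show ?thesis using s0 by auto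
  qed
  show ?case
  proof
    assume "sat S I e (All x \<phi>)"
    then show "sat S0 I e (All x \<phi>)" using IH S0 by auto
  next
    assume a: "sat S0 I e (All x \<phi>)"
    show "sat S I e (All x \<phi>)"
    proof (simp, intro ballI)
      fix s assume "s \<in> S"
      then obtain s0 where "s0 \<in> S0" "sat S I (e(x:=s)) \<phi> = sat S I (e(x:=s0)) \<phi>" using rep by blast
      then show "sat S I (e(x:=s)) \<phi>" using IH a by auto
    qed
  qed
qed auto

lemma fo_equiv_transfer:
  fixes S :: "'s set" and I :: "'s \<Rightarrow> 'q set" and \<phi> \<psi> :: "'q fo"
  assumes eqv: "fo_equiv \<phi> \<psi>" and Qf: "finite Qf" and Sne: "S \<noteq> {}"
    and IQ: "\<forall>s\<in>S. I s \<subseteq> Qf" and m: "models S I \<phi>"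
  shows "models S I \<psi>"
  unfolding models_def
proof (intro conjI allI impI)
  show "S \<noteq> {}" by fact
  fix e :: "nat \<Rightarrow> 's" assume e: "\<forall>x. e x \<in> S"
  define W where "W = vars \<phi> \<union> vars \<psi>"
  have W: "finite W" unfolding W_def by (simp add: finite_vars)
  define K where "K = card W"
  obtain ss where ss: "ss \<in> S" using Sne by blast
  define B where "B c = (if finite {s\<in>S. I s = c} then {s\<in>S. I s = c}
     else (SOME B. finite B \<and> card B = Suc K \<and> B \<subseteq> {s\<in>S. I s = c}))" for c
  have Bp: "finite (B c) \<and> B c \<subseteq> {s\<in>S. I s = c} \<and> (infinite {s\<in>S. I s = c} \<longrightarrow> card (B c) = Suc K)" for c
  proof (cases "finite {s\<in>S. I s = c}")
    case True then show ?thesis by (simp add: B_def)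
  next
    case False
    then have "\<exists>B. finite B \<and> card B = Suc K \<and> B \<subseteq> {s\<in>S. I s = c}"
      by (rule infinite_arbitrarily_large)
    then have "finite (B c) \<and> card (B c) = Suc K \<and> B c \<subseteq> {s\<in>S. I s = c}"
      unfolding B_def using False by (simp only: if_False) (rule someI_ex)
    then show ?thesis by blast
  qed
  define S0 where "S0 = insert ss (e ` W \<union> \<Union>(B ` Pow Qf))"
  have S0f: "finite S0" unfolding S0_def using W Qf Bp by auto
  have S0S: "S0 \<subseteq> S" unfolding S0_def using ss e Bp by blast
  have S0ne: "S0 \<noteq> {}" unfolding S0_def by blast
  have big: "\<forall>s\<in>S - S0. card W < card {t\<in>S0. I t = I s}"
  proof
    fix s assume s: "s \<in> S - S0"
    have c: "I s \<in> Pow Qf" using IQ s by auto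
    have "infinite {t\<in>S. I t = I s}"
    proof
      assume "finite {t\<in>S. I t = I s}"
      then have "B (I s) = {t\<in>S. I t = I s}" by (simp add: B_def)
      then have "s \<in> S0" using s c unfolding S0_def by blast
      then show False using s by blast
    qed
    then have "card (B (I s)) = Suc K" using Bp by blast
    moreover have "B (I s) \<subseteq> {t\<in>S0. I t = I s}" using Bp c unfolding S0_def by blast
    ultimately have "Suc K \<le> card {t\<in>S0. I t = I s}"
      by (metis (no_types, lifting) S0f card_mono finite_subset mem_Collect_eq subsetI)
    then show "card W < card {t\<in>S0. I t = I s}" unfolding K_def by simp
  qed
  have sub: "\<And>\<chi> e'. vars \<chi> \<subseteq> W \<Longrightarrow> (\<forall>x. e' x \<in> S0) \<Longrightarrow> sat S I e' \<chi> = sat S0 I e' \<chi>"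
    by (rule sat_subset[OF S0S S0f W big])
  have m0: "models S0 I \<phi>"
    unfolding models_def
  proof (intro conjI allI impI)
    show "S0 \<noteq> {}" by fact
    fix e1 :: "nat \<Rightarrow> 's" assume e1: "\<forall>x. e1 x \<in> S0"
    then have "sat S I e1 \<phi>" using m S0S unfolding models_def by blast
    then show "sat S0 I e1 \<phi>" using sub[of \<phi> e1] e1 W_def by auto
  qed
  obtain h where h: "bij_betw h S0 {0..<card S0}" using ex_bij_betw_finite_nat[OF S0f] by blast
  define N0 where "N0 = {0..<card S0}"
  define I' where "I' n = I (inv_into S0 h n)" for n
  have N0ne: "N0 \<noteq> {}" using S0ne S0f unfolding N0_def by auto
  have hinv: "bij_betw (inv_into S0 h) N0 S0" using h bij_betw_inv_into unfolding N0_def by blast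
  have mN: "models N0 I' \<phi>"
    unfolding models_def
  proof (intro conjI allI impI)
    show "N0 \<noteq> {}" by fact
    fix e2 :: "nat \<Rightarrow> nat" assume e2: "\<forall>x. e2 x \<in> N0"
    have "sat S0 I (inv_into S0 h \<circ> e2) \<phi> = sat N0 I' e2 \<phi>"
      apply (rule sat_bij)
      using hinv e2 unfolding bij_betw_def I'_def by auto
    moreover have "\<forall>x. (inv_into S0 h \<circ> e2) x \<in> S0"
      using hinv e2 bij_betw_apply by fastforce
    then have "sat S0 I (inv_into S0 h \<circ> e2) \<phi>"
      using m0 unfolding models_def by blast
    ultimately show "sat N0 I' e2 \<phi>" by simp
  qed
  have mN': "models N0 I' \<psi>" using eqv N0ne mN unfolding fo_equiv_def N0_def by blast
  have m0': "sat S0 I e1 \<psi>" if e1: "\<forall>x. e1 x \<in> S0" for e1 :: "nat \<Rightarrow> 's"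
  proof -
    have "sat N0 I' (h \<circ> e1) \<psi> = sat S0 I e1 \<psi>"
      apply (rule sat_bij)
      using h e1 unfolding bij_betw_def I'_def N0_def by auto
    moreover have "\<forall>x. (h \<circ> e1) x \<in> N0"
      using h e1 bij_betw_apply unfolding N0_def by fastforce
    then have "sat N0 I' (h \<circ> e1) \<psi>"
      using mN' unfolding models_def by blast
    ultimately show ?thesis by simp
  qed
  define e0 where "e0 x = (if x \<in> W then e x else ss)" for x
  have e0: "\<forall>x. e0 x \<in> S0" unfolding e0_def S0_def by auto
  have "sat S I e \<psi> = sat S I e0 \<psi>"
    apply (rule sat_fv) using fv_vars[of \<psi>] unfolding e0_def W_def by auto
  also have "\<dots> = sat S0 I e0 \<psi>" using sub[of \<psi> e0] e0 W_def by auto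
  finally show "sat S I e \<psi>" using m0'[OF e0] by simp
qed

lemma sat_big_and: "sat S I e (big_and xs) \<longleftrightarrow> (\<forall>\<phi>\<in>set xs. sat S I e \<phi>)"
  by (induction xs rule: big_and.induct) auto

lemma sat_big_or: "sat S I e (big_or xs) \<longleftrightarrow> (\<exists>\<phi>\<in>set xs. sat S I e \<phi>)"
  by (induction xs rule: big_or.induct) auto

lemma sat_type_fo: "finite A \<Longrightarrow> sat S I e (type_fo A x) \<longleftrightarrow> A \<subseteq> I (e x)"
proof -
  assume "finite A"
  then have "\<exists>qs. set qs = A \<and> distinct qs" by (rule finite_distinct_list)
  then have "set (SOME qs. set qs = A \<and> distinct qs) = A" by (metis (mono_tags, lifting) someI_ex)
  then show ?thesis unfolding type_fo_def sat_big_and by auto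
qed

lemma sat_diff_fo: "sat S I e (diff_fo zs) \<longleftrightarrow>
   (\<forall>i<length zs. \<forall>j<length zs. i \<noteq> j \<longrightarrow> e (zs ! i) \<noteq> e (zs ! j))"
  unfolding diff_fo_def sat_big_and by auto

lemma sat_foldr_Ex: "distinct xs \<Longrightarrow> sat S I e (foldr Ex xs \<phi>) \<longleftrightarrow>
  (\<exists>g. (\<forall>x\<in>set xs. g x \<in> S) \<and> sat S I (\<lambda>v. if v \<in> set xs then g v else e v) \<phi>)"
proof (induction xs arbitrary: e)
  case Nil
  then show ?case by simp
next
  case (Cons x xs)
  have xn: "x \<notin> set xs" and d: "distinct xs" using Cons.prems by auto
  have "sat S I e (foldr Ex (x # xs) \<phi>) \<longleftrightarrow> (\<exists>s\<in>S. sat S I (e(x:=s)) (foldr Ex xs \<phi>))" by simp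
  also have "\<dots> \<longleftrightarrow> (\<exists>s\<in>S. \<exists>g. (\<forall>x\<in>set xs. g x \<in> S) \<and>
       sat S I (\<lambda>v. if v \<in> set xs then g v else (e(x:=s)) v) \<phi>)"
    using Cons.IH[OF d] by blast
  also have "\<dots> \<longleftrightarrow> (\<exists>g. (\<forall>y\<in>set (x # xs). g y \<in> S) \<and>
       sat S I (\<lambda>v. if v \<in> set (x # xs) then g v else e v) \<phi>)"
  proof
    assume "\<exists>s\<in>S. \<exists>g. (\<forall>x\<in>set xs. g x \<in> S) \<and> sat S I (\<lambda>v. if v \<in> set xs then g v else (e(x:=s)) v) \<phi>"
    then obtain s g where sg: "s \<in> S" "\<forall>x\<in>set xs. g x \<in> S"
      "sat S I (\<lambda>v. if v \<in> set xs then g v else (e(x:=s)) v) \<phi>" by blast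
    have feq: "(\<lambda>v. if v \<in> set xs then g v else (e(x:=s)) v) =
       (\<lambda>v. if v \<in> set (x # xs) then (g(x:=s)) v else e v)" using xn by auto
    show "\<exists>g. (\<forall>y\<in>set (x # xs). g y \<in> S) \<and> sat S I (\<lambda>v. if v \<in> set (x # xs) then g v else e v) \<phi>"
      apply (rule exI[of _ "g(x:=s)"]) using sg feq xn by auto
  next
    assume "\<exists>g. (\<forall>y\<in>set (x # xs). g y \<in> S) \<and> sat S I (\<lambda>v. if v \<in> set (x # xs) then g v else e v) \<phi>"
    then obtain g where g: "\<forall>y\<in>set (x # xs). g y \<in> S"
      "sat S I (\<lambda>v. if v \<in> set (x # xs) then g v else e v) \<phi>" by blast
    have feq: "(\<lambda>v. if v \<in> set xs then g v else (e(x:=g x)) v) =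
       (\<lambda>v. if v \<in> set (x # xs) then g v else e v)" by auto
    show "\<exists>s\<in>S. \<exists>g. (\<forall>x\<in>set xs. g x \<in> S) \<and> sat S I (\<lambda>v. if v \<in> set xs then g v else (e(x:=s)) v) \<phi>"
      apply (rule bexI[of _ "g x"], rule exI[of _ g]) using g feq by auto
  qed
  finally show ?case .
qed

definition basic_sem :: "'s set \<Rightarrow> ('s \<Rightarrow> 'q set) \<Rightarrow> 'q set list \<Rightarrow> 'q set list \<Rightarrow> bool" where
  "basic_sem S I Te Tf \<longleftrightarrow> (\<exists>g. (\<forall>i<length Te. g i \<in> S) \<and>
     (\<forall>i<length Te. \<forall>j<length Te. i \<noteq> j \<longrightarrow> g i \<noteq> g j) \<and>
     (\<forall>i<length Te. Te ! i \<subseteq> I (g i)) \<and>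
     (\<forall>s\<in>S. (\<exists>i<length Te. s = g i) \<or> (\<exists>A\<in>set Tf. A \<subseteq> I s)))"

lemma sat_basic_fo:
  assumes fin: "\<forall>A\<in>set Te \<union> set Tf. finite A"
  shows "sat S I e (basic_fo Te Tf) \<longleftrightarrow> basic_sem S I Te Tf"
proof -
  define n where "n = length Te"
  have inner: "sat S I (\<lambda>v. if v \<in> set [0..<n] then g v else e v)
     (big_and [diff_fo [0..<n],
                 big_and [type_fo (Te ! i) i. i \<leftarrow> [0..<n]],
                 All n (big_or ([Eq n i. i \<leftarrow> [0..<n]] @ [big_or [type_fo A n. A \<leftarrow> Tf]]))])
     \<longleftrightarrow> ((\<forall>i<n. \<forall>j<n. i \<noteq> j \<longrightarrow> g i \<noteq> g j) \<and>
     (\<forall>i<n. Te ! i \<subseteq> I (g i)) \<and>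
     (\<forall>s\<in>S. (\<exists>i<n. s = g i) \<or> (\<exists>A\<in>set Tf. A \<subseteq> I s)))" for g
  proof -
    let ?e = "\<lambda>v. if v \<in> set [0..<n] then g v else e v"
    have a: "sat S I ?e (diff_fo [0..<n]) \<longleftrightarrow> (\<forall>i<n. \<forall>j<n. i \<noteq> j \<longrightarrow> g i \<noteq> g j)"
      unfolding sat_diff_fo by auto
    have b: "sat S I ?e (big_and [type_fo (Te ! i) i. i \<leftarrow> [0..<n]]) \<longleftrightarrow> (\<forall>i<n. Te ! i \<subseteq> I (g i))"
    proof -
      have "\<forall>i<n. finite (Te ! i)" using fin n_def by auto
      then have "\<forall>i<n. sat S I ?e (type_fo (Te ! i) i) \<longleftrightarrow> Te ! i \<subseteq> I (g i)"
        by (simp add: sat_type_fo)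
      then show ?thesis unfolding sat_big_and by auto
    qed
    have c: "sat S I (?e(n:=s)) (big_or ([Eq n i. i \<leftarrow> [0..<n]] @ [big_or [type_fo A n. A \<leftarrow> Tf]]))
       \<longleftrightarrow> ((\<exists>i<n. s = g i) \<or> (\<exists>A\<in>set Tf. A \<subseteq> I s))" for s
    proof -
      have "\<forall>A\<in>set Tf. sat S I (?e(n:=s)) (type_fo A n) \<longleftrightarrow> A \<subseteq> I s"
        using fin by (simp add: sat_type_fo)
      then show ?thesis by (auto simp: sat_big_or)
    qed
    show ?thesis using a b c by (simp add: sat_big_and)
  qed
  have "sat S I e (basic_fo Te Tf) \<longleftrightarrow> (\<exists>g. (\<forall>x\<in>set [0..<n]. g x \<in> S) \<and>
     sat S I (\<lambda>v. if v \<in> set [0..<n] then g v else e v)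
     (big_and [diff_fo [0..<n],
                 big_and [type_fo (Te ! i) i. i \<leftarrow> [0..<n]],
                 All n (big_or ([Eq n i. i \<leftarrow> [0..<n]] @ [big_or [type_fo A n. A \<leftarrow> Tf]]))]))"
    unfolding basic_fo_def Let_def n_def by (rule sat_foldr_Ex) simp
  also have "\<dots> \<longleftrightarrow> (\<exists>g. (\<forall>x\<in>set [0..<n]. g x \<in> S) \<and> ((\<forall>i<n. \<forall>j<n. i \<noteq> j \<longrightarrow> g i \<noteq> g j) \<and>
     (\<forall>i<n. Te ! i \<subseteq> I (g i)) \<and>
     (\<forall>s\<in>S. (\<exists>i<n. s = g i) \<or> (\<exists>A\<in>set Tf. A \<subseteq> I s))))"
    by (simp only: inner)
  also have "\<dots> \<longleftrightarrow> basic_sem S I Te Tf"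
    unfolding basic_sem_def n_def by (simp add: atLeast0LessThan lessThan_iff Ball_def)
  finally show ?thesis .
qed

lemma fo_equiv_sym: "fo_equiv \<phi> \<psi> \<Longrightarrow> fo_equiv \<psi> \<phi>"
  unfolding fo_equiv_def by blast

lemma functional_extract:
  fixes S :: "'s set" and I :: "'s \<Rightarrow> 'q set"
  assumes fn1: "functional_one_dir Q Ql \<phi>" and Qf: "finite Q" and Sne: "S \<noteq> {}"
    and IQ: "\<forall>s\<in>S. I s \<subseteq> Q" and m: "models S I \<phi>"
  shows "\<exists>J. (\<forall>s\<in>S. J s \<subseteq> I s) \<and> models S J \<phi> \<and>
     (\<exists>s0\<in>S. \<exists>q\<in>Ql. J s0 = {q} \<and> (\<forall>s\<in>S. s \<noteq> s0 \<longrightarrow> J s \<inter> Ql = {}))"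
proof -
  obtain bs where bs: "\<forall>(Te, Tf) \<in> set bs. basic_functional Q Ql Te Tf"
    and eqv: "fo_equiv \<phi> (big_or (map (\<lambda>(Te, Tf). basic_fo Te Tf) bs))"
    using fn1 unfolding functional_one_dir_def by (elim conjE exE) (rule that, assumption+)
  define \<psi> where "\<psi> = big_or (map (\<lambda>(Te, Tf). basic_fo Te Tf) bs)"
  have m\<psi>: "models S I \<psi>" using fo_equiv_transfer[OF eqv Qf Sne IQ m] \<psi>_def by simp
  obtain ss where ss: "ss \<in> S" using Sne by blast
  have "sat S I (\<lambda>_. ss) \<psi>" using m\<psi> ss unfolding models_def by simp
  then obtain Te Tf where TT: "(Te, Tf) \<in> set bs" and st: "sat S I (\<lambda>_. ss) (basic_fo Te Tf)"
    unfolding \<psi>_def sat_big_or by auto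
  have bf: "basic_functional Q Ql Te Tf" using bs TT by blast
  have fin: "\<forall>A\<in>set Te \<union> set Tf. finite A"
    using bf Qf unfolding basic_functional_def by (meson finite_subset)
  have "basic_sem S I Te Tf" using st sat_basic_fo[OF fin] by blast
  then obtain g where g1: "\<forall>i<length Te. g i \<in> S"
    and g2: "\<forall>i<length Te. \<forall>j<length Te. i \<noteq> j \<longrightarrow> g i \<noteq> g j"
    and g3: "\<forall>i<length Te. Te ! i \<subseteq> I (g i)"
    and g4: "\<forall>s\<in>S. (\<exists>i<length Te. s = g i) \<or> (\<exists>A\<in>set Tf. A \<subseteq> I s)"
    unfolding basic_sem_def by (elim exE conjE) (rule that)
  define n where "n = length Te"
  obtain A0 q where A0: "A0 \<in> set Te" "q \<in> Ql" "A0 = {q}"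
    and disj: "\<forall>B \<in> (set Te - {A0}) \<union> set Tf. B \<inter> Ql = {}"
    and dist: "distinct Te"
    using bf unfolding basic_functional_def by (elim conjE bexE) (rule that, assumption+)
  obtain i0 where i0: "i0 < n" "Te ! i0 = A0" using A0(1) unfolding n_def by (meson in_set_conv_nth)
  define J where "J s = (if \<exists>i<n. s = g i then Te ! (SOME i. i < n \<and> s = g i)
      else (SOME A. A \<in> set Tf \<and> A \<subseteq> I s))" for s
  have Jg: "J (g i) = Te ! i" if "i < n" for i
  proof -
    have "\<exists>i'. i' < n \<and> g i = g i'" using that by blast
    moreover have "(SOME i'. i' < n \<and> g i = g i') = i"
      apply (rule some_equality) using that g2 n_def by auto
    ultimately show ?thesis unfolding J_def using that by auto
  qed
  have Jo: "J s \<in> set Tf \<and> J s \<subseteq> I s" if "s \<in> S" "\<not>(\<exists>i<n. s = g i)" for s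
  proof -
    have "\<exists>A. A \<in> set Tf \<and> A \<subseteq> I s" using g4 that n_def by blast
    moreover have "J s = (SOME A. A \<in> set Tf \<and> A \<subseteq> I s)" unfolding J_def using that by auto
    ultimately show ?thesis using someI_ex[of "\<lambda>A. A \<in> set Tf \<and> A \<subseteq> I s"] by simp
  qed
  have JI: "\<forall>s\<in>S. J s \<subseteq> I s"
  proof
    fix s assume s: "s \<in> S"
    show "J s \<subseteq> I s"
    proof (cases "\<exists>i<n. s = g i")
      case True
      then obtain i where "i < n" "s = g i" by blast
      then show ?thesis using Jg g3 n_def by simp
    next
      case False
      then show ?thesis using Jo s by blast
    qed
  qed
  have b3: "\<forall>i<length Te. Te ! i \<subseteq> J (g i)" using Jg n_def by simp
  have b4: "\<forall>s\<in>S. (\<exists>i<length Te. s = g i) \<or> (\<exists>A\<in>set Tf. A \<subseteq> J s)"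
  proof
    fix s assume s: "s \<in> S"
    show "(\<exists>i<length Te. s = g i) \<or> (\<exists>A\<in>set Tf. A \<subseteq> J s)"
    proof (cases "\<exists>i<n. s = g i")
      case True then show ?thesis using n_def by blast
    next
      case False then have "J s \<in> set Tf" using Jo s by blast
      then show ?thesis by blast
    qed
  qed
  have "basic_sem S J Te Tf"
    unfolding basic_sem_def
    by (rule exI[of _ g], intro conjI g1 g2 b3 b4)
  then have "\<forall>e. sat S J e (basic_fo Te Tf)" using sat_basic_fo[OF fin] by blast
  moreover have mem: "basic_fo Te Tf \<in> set (map (\<lambda>(Te, Tf). basic_fo Te Tf) bs)" using TT by force
  ultimately have mJ\<psi>: "models S J \<psi>" unfolding models_def \<psi>_def sat_big_or using Sne by blast
  have JQ: "\<forall>s\<in>S. J s \<subseteq> Q" using JI IQ by blast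
  have mJ: "models S J \<phi>"
    using fo_equiv_transfer[OF fo_equiv_sym[OF eqv] Qf Sne JQ] mJ\<psi> \<psi>_def by simp
  have uniq: "\<forall>s\<in>S. s \<noteq> g i0 \<longrightarrow> J s \<inter> Ql = {}"
  proof (intro ballI impI)
    fix s assume s: "s \<in> S" "s \<noteq> g i0"
    show "J s \<inter> Ql = {}"
    proof (cases "\<exists>i<n. s = g i")
      case True
      then obtain i where i: "i < n" "s = g i" by blast
      then have "i \<noteq> i0" using s by blast
      then have "Te ! i \<noteq> Te ! i0" using dist i i0 n_def nth_eq_iff_index_eq by metis
      then have "Te ! i \<in> set Te - {A0}" using i i0 n_def by auto
      then show ?thesis using disj Jg i by auto
    next
      case False
      then show ?thesis using Jo[OF s(1)] disj by blast
    qed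
  qed
  show ?thesis
  proof (rule exI[of _ J], intro conjI JI mJ)
    have "g i0 \<in> S" using g1 i0 n_def by simp
    moreover have "J (g i0) = {q}" using Jg i0 A0 by simp
    ultimately show "\<exists>s0\<in>S. \<exists>q\<in>Ql. J s0 = {q} \<and> (\<forall>s\<in>S. s \<noteq> s0 \<longrightarrow> J s \<inter> Ql = {})"
      using uniq A0(2) by blast
  qed
qed

lemma models_Or_E: "fv \<phi> = {} \<Longrightarrow> fv \<psi> = {} \<Longrightarrow> models S I (Or \<phi> \<psi>) \<Longrightarrow> models S I \<phi> \<or> models S I \<psi>"
proof -
  assume f: "fv \<phi> = {}" "fv \<psi> = {}" and m: "models S I (Or \<phi> \<psi>)"
  then obtain s where s: "s \<in> S" unfolding models_def by blast
  then have "sat S I (\<lambda>_. s) (Or \<phi> \<psi>)" using m unfolding models_def by simp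
  then have "sat S I (\<lambda>_. s) \<phi> \<or> sat S I (\<lambda>_. s) \<psi>" by simp
  moreover have "sat S I e \<phi> = sat S I (\<lambda>_. s) \<phi>" for e using f by (intro sat_fv) simp
  moreover have "sat S I e \<psi> = sat S I (\<lambda>_. s) \<psi>" for e using f by (intro sat_fv) simp
  ultimately show ?thesis using m unfolding models_def by auto
qed

lemma models_Or_I1: "models S I \<phi> \<Longrightarrow> models S I (Or \<phi> \<psi>)"
  unfolding models_def by simp

lemma models_Or_I2: "models S I \<psi> \<Longrightarrow> models S I (Or \<phi> \<psi>)"
  unfolding models_def by simp

lemma models_atoms: "(\<forall>q\<in>atoms \<phi>. \<forall>s\<in>S. q \<in> I s \<longleftrightarrow> q \<in> I' s) \<Longrightarrow> models S I \<phi> \<Longrightarrow> models S I' \<phi>"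
  unfolding models_def using sat_atoms by blast

lemma models_cong: "(\<forall>s\<in>S. I s = I' s) \<Longrightarrow> models S I \<phi> \<Longrightarrow> models S I' \<phi>"
  by (rule models_atoms) auto

lemma is_disj_atoms: "is_disj P \<phi> \<Longrightarrow> (\<forall>\<psi>. P \<psi> \<longrightarrow> atoms \<psi> \<subseteq> X) \<Longrightarrow> atoms \<phi> \<subseteq> X"
  by (induction rule: is_disj.induct) auto

lemma is_conj_atoms: "is_conj P \<phi> \<Longrightarrow> (\<forall>\<psi>. P \<psi> \<longrightarrow> atoms \<psi> \<subseteq> X) \<Longrightarrow> atoms \<phi> \<subseteq> X"
  by (induction rule: is_conj.induct) auto

lemma comp_atoms:
  assumes H: "is_hfta A" and j: "j < length (parts A)" and q: "q \<in> parts A ! j" and a: "a \<in> alph A"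
  shows "atoms (delta A q a) \<subseteq> parts A ! j \<union> lower A j"
proof -
  have c: "(parts A ! j \<in> ex_parts A \<longrightarrow> existential_comp A j) \<and>
        (parts A ! j \<notin> ex_parts A \<longrightarrow> universal_comp A j \<or> transient_comp A j)"
    using H j unfolding is_hfta_def by blast
  show ?thesis
  proof (cases "parts A ! j \<in> ex_parts A")
    case True
    then have "existential_comp A j" using c by blast
    then have "is_disj (\<lambda>\<phi>. \<exists>x q' \<theta>. \<phi> = Ex x (And (Atom q' x) \<theta>) \<and>
         q' \<in> parts A ! j \<and> atoms \<theta> \<subseteq> lower A j) (delta A q a)"
      using q a unfolding existential_comp_def by blast
    then show ?thesis by (rule is_disj_atoms) auto
  next
    case False
    then have "universal_comp A j \<or> transient_comp A j" using c by blast
    then show ?thesis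
    proof
      assume "universal_comp A j"
      then have "is_conj (\<lambda>\<phi>. \<exists>x q' \<theta>. \<phi> = All x (Or (Atom q' x) \<theta>) \<and>
         q' \<in> parts A ! j \<and> atoms \<theta> \<subseteq> lower A j) (delta A q a)"
        using q a unfolding universal_comp_def by blast
      then show ?thesis by (rule is_conj_atoms) auto
    next
      assume "transient_comp A j"
      then show ?thesis using q a unfolding transient_comp_def by blast
    qed
  qed
qed

lemma lower_atoms:
  assumes H: "is_hfta A" and l: "l < length (parts A)" and q: "q \<in> lower A l" and a: "a \<in> alph A"
  shows "atoms (delta A q a) \<subseteq> lower A l"
proof -
  obtain j where j: "j < l" "q \<in> parts A ! j" using q unfolding lower_def by blast
  have "atoms (delta A q a) \<subseteq> parts A ! j \<union> lower A j" using comp_atoms[OF H _ j(2) a] j l by simp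
  also have "\<dots> \<subseteq> lower A l" using j unfolding lower_def
    apply auto by (meson lessThan_iff less_trans)
  finally show ?thesis .
qed

lemma lower_disj:
  assumes H: "is_hfta A" and l: "l < length (parts A)"
  shows "parts A ! l \<inter> lower A l = {}"
proof -
  have d: "\<forall>i<length (parts A). \<forall>j<length (parts A). i \<noteq> j \<longrightarrow> parts A ! i \<inter> parts A ! j = {}"
    using H unfolding is_hfta_def by blast
  have "parts A ! l \<inter> parts A ! j = {}" if "j < l" for j
    using d that l by simp
  then show ?thesis unfolding lower_def by blast
qed

lemma exC_simps:
  "states (exC_aut AP p Ql A) = states A" "init (exC_aut AP p Ql A) = init A"
  "colour (exC_aut AP p Ql A) = colour A" "alph (exC_aut AP p Ql A) = Pow (AP - {p})"
  "delta (exC_aut AP p Ql A) q a = (if q \<in> Ql then Or (delta A q a) (delta A q (insert p a)) else delta A q a)"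
  unfolding exC_aut_def by simp_all

locale D1 =
  fixes AP :: "'ap set" and p :: 'ap and A :: "('ap set, 'q) hfta" and l :: nat
    and T :: "'d list set" and Lab :: "'d list \<Rightarrow> 'ap set"
    and Tr :: "('q \<times> 'd) list set" and Lr :: "('q \<times> 'd) list \<Rightarrow> 'q \<times> 'd list"
  assumes pAP: "p \<in> AP"
    and alph: "alph A = Pow AP"
    and N: "nondet_one_path A l TYPE('d)"
    and nb: "non_blocking T"
    and LabE: "\<forall>w\<in>T. Lab w \<in> Pow (AP - {p})"
    and acc: "accepting_run (exC_aut AP p (parts A ! l) A) T Lab Tr Lr"
begin

abbreviation "Ql \<equiv> parts A ! l"
abbreviation "L \<equiv> lower A l"
abbreviation "E \<equiv> exC_aut AP p Ql A"

definition Sy where "Sy y = children T (snd (Lr y))"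
definition Iy where "Iy y w' = {q'. (q', w') \<in> Lr ` children Tr y}"

lemma H: "is_hfta A" and lpar: "l < length (parts A)" and initQ: "init A \<in> Ql"
  and Qfin: "finite (states A)"
  using N unfolding nondet_one_path_def is_hfta_def wf_fta_def by auto

lemma run: "is_run E T Lab Tr Lr" using acc unfolding accepting_run_def by blast

lemma treeTr: "is_tree Tr" and Lr0: "Lr [] = (init A, [])"
  using run unfolding is_run_def exC_simps by auto

lemma nilTr: "[] \<in> Tr"
  using treeTr unfolding is_tree_def by (metis append_Nil ex_in_conv)

lemma L1:
  assumes y: "y \<in> Tr"
  shows "Sy y \<noteq> {}" "\<forall>w'\<in>Sy y. Iy y w' \<subseteq> states A"
    "models (Sy y) (Iy y) (delta E (fst (Lr y)) (Lab (snd (Lr y))))"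
    "Lr ` children Tr y = {(q', w'). w' \<in> Sy y \<and> q' \<in> Iy y w'}"
    "Lr y \<in> states A \<times> T"
proof -
  obtain I where I1: "\<forall>w'\<in>Sy y. I w' \<subseteq> states A"
      and I2: "models (Sy y) I (delta E (fst (Lr y)) (Lab (snd (Lr y))))"
      and I3: "Lr ` children Tr y = {(q', w'). w' \<in> Sy y \<and> q' \<in> I w'}"
      and I4: "Lr y \<in> states A \<times> T"
    using run y unfolding is_run_def Sy_def exC_simps(1) by blast
  have eq: "\<forall>w'\<in>Sy y. Iy y w' = I w'" unfolding Iy_def I3 by auto
  show "Sy y \<noteq> {}" using I2 unfolding models_def by blast
  show "\<forall>w'\<in>Sy y. Iy y w' \<subseteq> states A" using eq I1 by simp
  show "models (Sy y) (Iy y) (delta E (fst (Lr y)) (Lab (snd (Lr y))))"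
    using models_cong[OF _ I2] eq by simp
  show "Lr ` children Tr y = {(q', w'). w' \<in> Sy y \<and> q' \<in> Iy y w'}"
    unfolding Iy_def I3 by auto
  show "Lr y \<in> states A \<times> T" by fact
qed

lemma disjQL: "Ql \<inter> L = {}" using lower_disj[OF H lpar] .

lemma atomsQ: "q \<in> Ql \<Longrightarrow> a \<in> Pow AP \<Longrightarrow> atoms (delta A q a) \<subseteq> Ql \<union> L"
  using comp_atoms[OF H lpar] alph by blast

lemma atomsL: "q \<in> L \<Longrightarrow> a \<in> Pow AP \<Longrightarrow> atoms (delta A q a) \<subseteq> L"
  using lower_atoms[OF H lpar] alph by blast

lemma fvQ: "q \<in> states A \<Longrightarrow> a \<in> Pow AP \<Longrightarrow> fv (delta A q a) = {}"
  using H alph unfolding is_hfta_def wf_fta_def by blast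

lemma QlS: "Ql \<subseteq> states A"
  using H lpar unfolding is_hfta_def by auto

lemma funQ: "q \<in> Ql \<Longrightarrow> a \<in> Pow AP \<Longrightarrow> functional_one_dir (states A) Ql (delta A q a)"
  using N alph unfolding nondet_one_path_def by blast

definition Pch where "Pch y a' J \<longleftrightarrow> a' \<in> {Lab (snd (Lr y)), insert p (Lab (snd (Lr y)))} \<and>
   (\<forall>w'\<in>Sy y. J w' \<subseteq> Iy y w' \<and> J w' \<subseteq> Ql \<union> L) \<and> models (Sy y) J (delta A (fst (Lr y)) a') \<and>
   (\<exists>w0\<in>Sy y. \<exists>q1\<in>Ql. J w0 = {q1} \<and> (\<forall>w'\<in>Sy y. w' \<noteq> w0 \<longrightarrow> J w' \<inter> Ql = {}))"

lemma L2:
  assumes y: "y \<in> Tr" and q: "fst (Lr y) \<in> Ql"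
  shows "\<exists>a' J. Pch y a' J"
proof -
  define w where "w = snd (Lr y)"
  define q where "q = fst (Lr y)"
  have wT: "w \<in> T" using L1(5)[OF y] w_def by auto
  have a1: "Lab w \<in> Pow AP" using LabE wT by auto
  have a2: "insert p (Lab w) \<in> Pow AP" using LabE wT pAP by auto
  have qS: "q \<in> states A" using q QlS q_def by auto
  have "models (Sy y) (Iy y) (Or (delta A q (Lab w)) (delta A q (insert p (Lab w))))"
    using L1(3)[OF y] q unfolding exC_simps w_def q_def by simp
  then have "models (Sy y) (Iy y) (delta A q (Lab w)) \<or> models (Sy y) (Iy y) (delta A q (insert p (Lab w)))"
    using models_Or_E fvQ[OF qS a1] fvQ[OF qS a2] by blast
  then obtain a' where a': "a' \<in> {Lab w, insert p (Lab w)}" "models (Sy y) (Iy y) (delta A q a')"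
    by blast
  have a'P: "a' \<in> Pow AP" using a' a1 a2 by auto
  obtain J0 where J0: "\<forall>s\<in>Sy y. J0 s \<subseteq> Iy y s" "models (Sy y) J0 (delta A q a')"
     "\<exists>s0\<in>Sy y. \<exists>q\<in>Ql. J0 s0 = {q} \<and> (\<forall>s\<in>Sy y. s \<noteq> s0 \<longrightarrow> J0 s \<inter> Ql = {})"
    using functional_extract[OF funQ[OF _ a'P] Qfin L1(1)[OF y] L1(2)[OF y] a'(2)] q q_def by blast
  define J where "J s = J0 s \<inter> (Ql \<union> L)" for s
  have "models (Sy y) J (delta A q a')"
    apply (rule models_atoms[OF _ J0(2)])
    using atomsQ[OF _ a'P] q q_def unfolding J_def by blast
  moreover have "\<exists>w0\<in>Sy y. \<exists>q1\<in>Ql. J w0 = {q1} \<and> (\<forall>w'\<in>Sy y. w' \<noteq> w0 \<longrightarrow> J w' \<inter> Ql = {})"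
    using J0(3) unfolding J_def by blast
  moreover have "\<forall>w'\<in>Sy y. J w' \<subseteq> Iy y w' \<and> J w' \<subseteq> Ql \<union> L" using J0(1) unfolding J_def by blast
  ultimately have "Pch y a' J" unfolding Pch_def using a' w_def q_def by blast
  then show ?thesis by blast
qed

definition ch where "ch y = (SOME aJ. Pch y (fst aJ) (snd aJ))"

lemma L2': "y \<in> Tr \<Longrightarrow> fst (Lr y) \<in> Ql \<Longrightarrow> Pch y (fst (ch y)) (snd (ch y))"
proof -
  assume "y \<in> Tr" "fst (Lr y) \<in> Ql"
  then obtain a' J where "Pch y a' J" using L2 by blast
  then have "\<exists>aJ. Pch y (fst aJ) (snd aJ)" by (metis fst_conv snd_conv)
  then show ?thesis unfolding ch_def by (rule someI_ex)
qed

definition Jn where "Jn y = (if fst (Lr y) \<in> Ql then snd (ch y) else (\<lambda>w'. Iy y w' \<inter> L))"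
definition allowed where "allowed y = {(q', w'). w' \<in> Sy y \<and> q' \<in> Jn y w'}"
definition rep where "rep y lab = (SOME y'. y' \<in> children Tr y \<and> Lr y' = lab)"
definition Tr' where "Tr' = {y \<in> Tr. \<forall>i<length y. take (Suc i) y = rep (take i y) (Lr (take (Suc i) y)) \<and>
    Lr (take (Suc i) y) \<in> allowed (take i y)}"

lemma L3: assumes y: "y \<in> Tr"
  shows "allowed y \<subseteq> Lr ` children Tr y" "\<And>q' w'. (q', w') \<in> allowed y \<Longrightarrow> q' \<in> Ql \<union> L"
    "\<And>q' w'. (q', w') \<in> allowed y \<Longrightarrow> fst (Lr y) \<notin> Ql \<Longrightarrow> q' \<in> L"
proof -
  have "\<forall>w'\<in>Sy y. Jn y w' \<subseteq> Iy y w' \<and> Jn y w' \<subseteq> Ql \<union> L"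
  proof (cases "fst (Lr y) \<in> Ql")
    case True
    then show ?thesis using L2'[OF y True] unfolding Jn_def Pch_def by simp
  next
    case False
    then show ?thesis unfolding Jn_def by auto
  qed
  then show "allowed y \<subseteq> Lr ` children Tr y" "\<And>q' w'. (q', w') \<in> allowed y \<Longrightarrow> q' \<in> Ql \<union> L"
    unfolding allowed_def L1(4)[OF y] by auto
  show "\<And>q' w'. (q', w') \<in> allowed y \<Longrightarrow> fst (Lr y) \<notin> Ql \<Longrightarrow> q' \<in> L"
    unfolding allowed_def Jn_def by auto
qed

lemma L4: "y' \<in> children Tr y \<Longrightarrow> \<exists>d. y' = y @ [d]"
  unfolding children_def by blast

end

context D1 begin

lemma Tr_pref: "y @ v \<in> Tr \<Longrightarrow> y \<in> Tr"
  using treeTr unfolding is_tree_def by blast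

lemma L5: "y @ [d] \<in> Tr' \<longleftrightarrow> y \<in> Tr' \<and> y @ [d] \<in> Tr \<and> y @ [d] = rep y (Lr (y @ [d])) \<and>
    Lr (y @ [d]) \<in> allowed y"
proof -
  let ?P = "\<lambda>z i. take (Suc i) z = rep (take i z) (Lr (take (Suc i) z)) \<and>
    Lr (take (Suc i) z) \<in> allowed (take i z)"
  have a: "(\<forall>i<length (y @ [d]). ?P (y @ [d]) i) \<longleftrightarrow> (\<forall>i<length y. ?P y i) \<and> ?P (y @ [d]) (length y)"
  proof -
    have "?P (y @ [d]) i = ?P y i" if "i < length y" for i
      using that by (simp add: take_append)
    then show ?thesis by (auto simp: less_Suc_eq)
  qed
  have b: "?P (y @ [d]) (length y) \<longleftrightarrow> y @ [d] = rep y (Lr (y @ [d])) \<and> Lr (y @ [d]) \<in> allowed y"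
    by simp
  show ?thesis unfolding Tr'_def mem_Collect_eq a b using Tr_pref by blast
qed

lemma L6: "[] \<in> Tr'" "Tr' \<subseteq> Tr" "is_tree Tr'"
proof -
  show "[] \<in> Tr'" unfolding Tr'_def using nilTr by simp
  show "Tr' \<subseteq> Tr" unfolding Tr'_def by blast
  have "w \<in> Tr'" if wv: "w @ v \<in> Tr'" for w v
  proof -
    have "w \<in> Tr" using wv Tr_pref unfolding Tr'_def by blast
    moreover have "take (Suc i) w = rep (take i w) (Lr (take (Suc i) w)) \<and>
        Lr (take (Suc i) w) \<in> allowed (take i w)" if i: "i < length w" for i
    proof -
      have e: "take (Suc i) (w @ v) = take (Suc i) w" "take i (w @ v) = take i w"
        using i by (simp_all add: take_append)
      have "i < length (w @ v)" using i by simp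
      then have "take (Suc i) (w @ v) = rep (take i (w @ v)) (Lr (take (Suc i) (w @ v))) \<and>
        Lr (take (Suc i) (w @ v)) \<in> allowed (take i (w @ v))" using wv unfolding Tr'_def by blast
      then show ?thesis unfolding e .
    qed
    ultimately show ?thesis unfolding Tr'_def by blast
  qed
  then show "is_tree Tr'" unfolding is_tree_def using \<open>[] \<in> Tr'\<close> by blast
qed

lemma L7: assumes y: "y \<in> Tr'" shows "Lr ` children Tr' y = allowed y"
proof
  show "Lr ` children Tr' y \<subseteq> allowed y"
  proof
    fix lab assume "lab \<in> Lr ` children Tr' y"
    then obtain d where "y @ [d] \<in> Tr'" "lab = Lr (y @ [d])" unfolding children_def by blast
    then show "lab \<in> allowed y" using L5 by blast
  qed
  show "allowed y \<subseteq> Lr ` children Tr' y"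
  proof
    fix lab assume lab: "lab \<in> allowed y"
    have yT: "y \<in> Tr" using y L6 by blast
    then have "lab \<in> Lr ` children Tr y" using L3(1) lab by blast
    then have "\<exists>y'. y' \<in> children Tr y \<and> Lr y' = lab" by blast
    then have r: "rep y lab \<in> children Tr y \<and> Lr (rep y lab) = lab" unfolding rep_def by (rule someI_ex)
    then obtain d where d: "rep y lab = y @ [d]" using L4 by blast
    have "y @ [d] \<in> Tr" using r d unfolding children_def by auto
    then have "y @ [d] \<in> Tr'" using L5 y r d lab by simp
    then show "lab \<in> Lr ` children Tr' y" using r d unfolding children_def by force
  qed
qed

lemma L8: "y \<in> Tr' \<Longrightarrow> fst (Lr y) \<in> Ql \<union> L"
proof (induction y rule: rev_induct)
  case Nil
  then show ?case using Lr0 initQ by simp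
next
  case (snoc d y)
  then have "y \<in> Tr" "Lr (y @ [d]) \<in> allowed y" using L5 L6 by blast+
  then show ?case using L3(2) by (metis prod.collapse)
qed

lemma L9: "y \<in> Tr \<Longrightarrow> length (snd (Lr y)) = length y"
proof (induction y rule: rev_induct)
  case Nil
  then show ?case using Lr0 by simp
next
  case (snoc d y)
  then have yT: "y \<in> Tr" using Tr_pref by blast
  have "y @ [d] \<in> children Tr y" using snoc unfolding children_def by blast
  then have "Lr (y @ [d]) \<in> Lr ` children Tr y" by blast
  then have "snd (Lr (y @ [d])) \<in> Sy y" using L1(4)[OF yT] by auto
  then have "length (snd (Lr (y @ [d]))) = Suc (length (snd (Lr y)))" unfolding Sy_def children_def by auto
  then show ?case using snoc yT by simp
qed

definition nxt where "nxt y = (SOME lab. lab \<in> allowed y \<and> fst lab \<in> Ql)"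

primrec c where "c 0 = []" | "c (Suc k) = rep (c k) (nxt (c k))"

lemma L10a: assumes y: "y \<in> Tr'" and q: "fst (Lr y) \<in> Ql"
  shows "rep y (nxt y) \<in> Tr'" "rep y (nxt y) \<in> children Tr y" "Lr (rep y (nxt y)) = nxt y"
    "nxt y \<in> allowed y" "fst (nxt y) \<in> Ql"
proof -
  have yT: "y \<in> Tr" using y L6 by blast
  obtain w0 q1 where "w0 \<in> Sy y" "q1 \<in> Ql" "Jn y w0 = {q1}"
    using L2'[OF yT q] unfolding Pch_def Jn_def using q by auto
  then have "(q1, w0) \<in> allowed y" unfolding allowed_def by auto
  then have "\<exists>lab. lab \<in> allowed y \<and> fst lab \<in> Ql" using \<open>q1 \<in> Ql\<close> by auto
  then have n: "nxt y \<in> allowed y \<and> fst (nxt y) \<in> Ql" unfolding nxt_def by (rule someI_ex)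
  then show "nxt y \<in> allowed y" "fst (nxt y) \<in> Ql" by auto
  then have "nxt y \<in> Lr ` children Tr y" using L3(1)[OF yT] by blast
  then have "\<exists>y'. y' \<in> children Tr y \<and> Lr y' = nxt y" by (metis (no_types, lifting) imageE)
  then have r: "rep y (nxt y) \<in> children Tr y \<and> Lr (rep y (nxt y)) = nxt y" unfolding rep_def by (rule someI_ex)
  then show "rep y (nxt y) \<in> children Tr y" "Lr (rep y (nxt y)) = nxt y" by auto
  obtain d where d: "rep y (nxt y) = y @ [d]" using r L4 by blast
  have "y @ [d] \<in> Tr" using r d unfolding children_def by auto
  then show "rep y (nxt y) \<in> Tr'" using L5 y r d n by simp
qed

lemma L10: "c k \<in> Tr' \<and> fst (Lr (c k)) \<in> Ql \<and> length (c k) = k"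
proof (induction k)
  case 0
  then show ?case using L6 Lr0 initQ by simp
next
  case (Suc k)
  then have "c (Suc k) \<in> children Tr (c k)" using L10a by simp
  then have "length (c (Suc k)) = Suc k" using Suc unfolding children_def by auto
  then show ?case using Suc L10a by simp
qed

lemma L11: assumes y: "y \<in> Tr" and q: "fst (Lr y) \<in> Ql"
  and a1: "(q1, w1) \<in> allowed y" and a2: "(q2, w2) \<in> allowed y" and q1: "q1 \<in> Ql"
  shows "q2 \<in> Ql \<longleftrightarrow> w2 = w1" "q2 \<in> Ql \<Longrightarrow> q2 = q1"
proof -
  obtain w0 q0 where w0: "w0 \<in> Sy y" "q0 \<in> Ql" "Jn y w0 = {q0}"
     "\<forall>w'\<in>Sy y. w' \<noteq> w0 \<longrightarrow> Jn y w' \<inter> Ql = {}"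
    using L2'[OF y q] unfolding Pch_def Jn_def using q by auto
  have "w1 = w0" using a1 q1 w0 unfolding allowed_def by auto
  then have "q1 = q0" using a1 w0 unfolding allowed_def by auto
  show "q2 \<in> Ql \<longleftrightarrow> w2 = w1" using a2 w0 \<open>w1 = w0\<close> unfolding allowed_def by auto
  show "q2 \<in> Ql \<Longrightarrow> q2 = q1" using a2 w0 \<open>w1 = w0\<close> \<open>q1 = q0\<close> unfolding allowed_def by auto
qed

end

context D1 begin

lemma L3b: "y \<in> Tr \<Longrightarrow> \<forall>w'\<in>Sy y. Jn y w' \<subseteq> Iy y w'"
proof -
  assume y: "y \<in> Tr"
  show ?thesis
  proof (cases "fst (Lr y) \<in> Ql")
    case True
    then show ?thesis using L2'[OF y True] unfolding Jn_def Pch_def by simp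
  next
    case False
    then show ?thesis unfolding Jn_def by auto
  qed
qed

lemma L12: "y \<in> Tr' \<Longrightarrow> fst (Lr y) \<in> Ql \<Longrightarrow> y = c (length y)"
proof (induction y rule: rev_induct)
  case Nil
  then show ?case by simp
next
  case (snoc d z)
  have z: "z \<in> Tr'" "z @ [d] = rep z (Lr (z @ [d]))" "Lr (z @ [d]) \<in> allowed z"
    using snoc.prems L5 by blast+
  have zT: "z \<in> Tr" using z L6 by blast
  have zQ: "fst (Lr z) \<in> Ql"
  proof (rule ccontr)
    assume "fst (Lr z) \<notin> Ql"
    then have "fst (Lr (z @ [d])) \<in> L" using L3(3)[OF zT] z(3) by (metis prod.collapse)
    then show False using snoc.prems disjQL by blast
  qed
  have zc: "z = c (length z)" using snoc.IH z zQ by blast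
  define k where "k = length z"
  have ck: "c k \<in> Tr'" "fst (Lr (c k)) \<in> Ql" using zc k_def z zQ by auto
  have n: "nxt (c k) \<in> allowed (c k)" "fst (nxt (c k)) \<in> Ql" using L10a[OF ck] by auto
  have "Lr (z @ [d]) = nxt (c k)"
  proof -
    obtain q1 w1 where nq: "nxt (c k) = (q1, w1)" by force
    obtain q2 w2 where lq: "Lr (z @ [d]) = (q2, w2)" by force
    have ckT: "c k \<in> Tr" using ck L6 by blast
    have a2: "(q2, w2) \<in> allowed (c k)" using z(3) lq zc k_def by simp
    have "q2 \<in> Ql" using snoc.prems lq by simp
    then have "w2 = w1" "q2 = q1" using L11[OF ckT ck(2), of q1 w1 q2 w2] n nq a2 by auto
    then show ?thesis using nq lq by simp
  qed
  then have e: "z @ [d] = c (Suc k)" using z(2) zc k_def by simp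
  have "length (z @ [d]) = Suc k" using k_def by simp
  then show ?case using e by (simp only:)
qed

definition pi where "pi k = snd (Lr (c k))"

lemma len_pi: "length (pi k) = k"
  using L9 L10[of k] L6 unfolding pi_def by auto

lemma pi_step: "pi (Suc k) \<in> children T (pi k)"
proof -
  have ck: "c k \<in> Tr'" "fst (Lr (c k)) \<in> Ql" using L10 by auto
  have "Lr (c (Suc k)) \<in> allowed (c k)" using L10a[OF ck] by simp
  then show ?thesis unfolding pi_def allowed_def Sy_def by auto
qed

lemma L13: "y \<in> Tr' \<Longrightarrow> snd (Lr y) = pi k \<Longrightarrow> y = c k"
proof (induction k arbitrary: y)
  case 0
  have "length y = 0" using L9[of y] 0 L6 len_pi[of 0] by auto
  then show ?case by simp
next
  case (Suc k)
  have "length y = Suc k" using L9[of y] Suc.prems L6 len_pi[of "Suc k"] by auto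
  then obtain z d where yz: "y = z @ [d]" by (metis length_Suc_conv_rev)
  have z: "z \<in> Tr'" "Lr (z @ [d]) \<in> allowed z"
    using Suc.prems yz L5 by blast+
  have zT: "z \<in> Tr" using z L6 by blast
  have "snd (Lr y) \<in> children T (snd (Lr z))" using z(2) yz unfolding allowed_def Sy_def by auto
  then obtain e where e: "snd (Lr y) = snd (Lr z) @ [e]" unfolding children_def by blast
  obtain e' where e': "pi (Suc k) = pi k @ [e']" using pi_step[of k] unfolding children_def by blast
  have "snd (Lr z) = pi k" using e e' Suc.prems by simp
  then have zc: "z = c k" using Suc.IH z by blast
  have ck: "c k \<in> Tr'" "fst (Lr (c k)) \<in> Ql" using L10 by auto
  have ckT: "c k \<in> Tr" using ck L6 by blast
  have n: "nxt (c k) \<in> allowed (c k)" "fst (nxt (c k)) \<in> Ql" "Lr (c (Suc k)) = nxt (c k)"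
    using L10a[OF ck] by auto
  obtain q1 w1 where nq: "nxt (c k) = (q1, w1)" by force
  obtain q2 w2 where lq: "Lr y = (q2, w2)" by force
  have w: "w2 = w1" using lq nq n(3) Suc.prems unfolding pi_def by simp
  have "q2 \<in> Ql" using L11(1)[OF ckT ck(2), of q1 w1 q2 w2] n nq z(2) yz zc lq w by auto
  then have "y = c (length y)" using L12 Suc.prems lq by simp
  then show ?case using \<open>length y = Suc k\<close> by simp
qed

definition Lab' where "Lab' w = (if w \<in> range pi then fst (ch (c (length w))) else Lab w)"

lemma Lab'_pi: "Lab' (pi k) = fst (ch (c k))"
  unfolding Lab'_def using len_pi by auto

lemma run': "is_run A T Lab' Tr' Lr"
  unfolding is_run_def
proof (intro conjI ballI)
  show "is_tree Tr'" using L6 by blast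
  show "Lr [] = (init A, [])" using Lr0 .
  fix y assume y: "y \<in> Tr'"
  have yT: "y \<in> Tr" using y L6 by blast
  show "Lr y \<in> states A \<times> T" using L1(5)[OF yT] .
  have a: "\<forall>w'\<in>children T (snd (Lr y)). Jn y w' \<subseteq> states A"
    using L3b[OF yT] L1(2)[OF yT] unfolding Sy_def by blast
  have b: "models (children T (snd (Lr y))) (Jn y) (delta A (fst (Lr y)) (Lab' (snd (Lr y))))"
  proof (cases "fst (Lr y) \<in> Ql")
    case True
    define k where "k = length y"
    have yc: "y = c k" using L12[OF y True] k_def by simp
    have "Lab' (snd (Lr y)) = fst (ch y)" using Lab'_pi[of k] yc unfolding pi_def by simp
    moreover have "Jn y = snd (ch y)" unfolding Jn_def using True by simp
    ultimately show ?thesis using L2'[OF yT True] unfolding Pch_def Sy_def by simp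
  next
    case False
    then have qL: "fst (Lr y) \<in> L" using L8[OF y] by blast
    have "snd (Lr y) \<notin> range pi"
    proof
      assume "snd (Lr y) \<in> range pi"
      then obtain k where "snd (Lr y) = pi k" by blast
      then have "y = c k" using L13 y by blast
      then show False using L10[of k] False by simp
    qed
    then have lab: "Lab' (snd (Lr y)) = Lab (snd (Lr y))" unfolding Lab'_def by simp
    have wT: "snd (Lr y) \<in> T" using L1(5)[OF yT] by auto
    have aP: "Lab (snd (Lr y)) \<in> Pow AP" using LabE wT by auto
    have m: "models (Sy y) (Iy y) (delta A (fst (Lr y)) (Lab (snd (Lr y))))"
      using L1(3)[OF yT] False unfolding exC_simps by simp
    have "models (Sy y) (Jn y) (delta A (fst (Lr y)) (Lab (snd (Lr y))))"
      apply (rule models_atoms[OF _ m])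
      using atomsL[OF qL aP] False unfolding Jn_def by auto
    then show ?thesis using lab unfolding Sy_def by simp
  qed
  have c: "Lr ` children Tr' y = {(q', w'). w' \<in> children T (snd (Lr y)) \<and> q' \<in> Jn y w'}"
    using L7[OF y] unfolding allowed_def Sy_def .
  show "\<exists>I. (\<forall>w'\<in>children T (snd (Lr y)). I w' \<subseteq> states A) \<and>
             models (children T (snd (Lr y))) I (delta A (fst (Lr y)) (Lab' (snd (Lr y)))) \<and>
             Lr ` children Tr' y = {(q', w'). w' \<in> children T (snd (Lr y)) \<and> q' \<in> I w'}"
    using a b c by blast
qed

lemma acc': "accepting_run A T Lab' Tr' Lr"
  unfolding accepting_run_def
proof (intro conjI allI impI)
  show "is_run A T Lab' Tr' Lr" by (rule run')
  fix \<rho> assume "inf_path Tr' \<rho>"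
  then have "inf_path Tr \<rho>" using L6(2) unfolding inf_path_def children_def by blast
  then show "even (Max {c. infinite {k. colour A (fst (Lr (\<rho> k))) = c}})"
    using acc unfolding accepting_run_def exC_simps by blast
qed

lemma dir1_main: "(T, Lab) \<in> chain_proj AP p (lang A)"
proof -
  have kt: "kripke_tree (AP - {p}) T Lab" using nb LabE unfolding kripke_tree_def by blast
  have ip: "inf_path T pi" unfolding inf_path_def using pi_step Lr0 by (simp add: pi_def)
  have chk: "fst (ch (c k)) \<in> {Lab (pi k), insert p (Lab (pi k))}" for k
    using L2'[of "c k"] L10[of k] L6 unfolding Pch_def pi_def by blast
  have "Lab' w \<in> Pow AP" if w: "w \<in> T" for w
  proof (cases "w \<in> range pi")
    case True
    then obtain k where "w = pi k" by blast
    moreover have "Lab w \<subseteq> AP" using LabE w by auto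
    ultimately show ?thesis using chk[of k] Lab'_pi[of k] pAP by auto
  next
    case False
    then show ?thesis unfolding Lab'_def using LabE w by auto
  qed
  then have "(T, Lab') \<in> lang A" unfolding lang_def alph using nb acc' by blast
  moreover have "\<forall>w\<in>T. w \<notin> range pi \<longrightarrow> Lab' w = Lab w" unfolding Lab'_def by simp
  moreover have "\<forall>w\<in>T. w \<in> range pi \<longrightarrow> Lab' w - {p} = Lab w"
  proof (intro ballI impI)
    fix w assume w: "w \<in> T" "w \<in> range pi"
    then obtain k where k: "w = pi k" by blast
    have "p \<notin> Lab w" using LabE w by auto
    then show "Lab' w - {p} = Lab w" using chk[of k] Lab'_pi[of k] k by auto
  qed
  ultimately show ?thesis unfolding chain_proj_def using kt ip by blast
qed

end

lemma dir2:
  fixes AP :: "'ap set" and p :: 'ap and A :: "('ap set, 'q) hfta" and l :: nat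
  assumes "finite AP" and pAP: "p \<in> AP"
    and alph: "alph A = Pow AP"
    and N: "nondet_one_path A l TYPE('d)"
  shows "chain_proj AP p (lang A) \<subseteq>
     (lang (exC_aut AP p (parts A ! l) A) :: ('d list set \<times> ('d list \<Rightarrow> 'ap set)) set)"
proof
  fix x :: "'d list set \<times> ('d list \<Rightarrow> 'ap set)"
  assume "x \<in> chain_proj AP p (lang A)"
  then obtain T Lab \<pi> Lab' where x: "x = (T, Lab)" and kt: "kripke_tree (AP - {p}) T Lab"
    and \<pi>: "inf_path T \<pi>" and L': "(T, Lab') \<in> lang A"
    and off: "\<forall>w\<in>T. w \<notin> range \<pi> \<longrightarrow> Lab' w = Lab w"
    and on: "\<forall>w\<in>T. w \<in> range \<pi> \<longrightarrow> Lab' w - {p} = Lab w"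
    unfolding chain_proj_def by blast
  let ?Ql = "parts A ! l"
  let ?E = "exC_aut AP p ?Ql A"
  have "\<forall>(T::'d list set) Lab. (T, Lab) \<in> lang A \<longrightarrow> (\<forall>\<pi>. inf_path T \<pi> \<longrightarrow>
        (\<exists>Tr Lr. accepting_run A T Lab Tr Lr \<and>
           (\<forall>k. (\<exists>!y. y \<in> Tr \<and> snd (Lr y) = \<pi> k) \<and>
                (\<forall>y\<in>Tr. snd (Lr y) = \<pi> k \<longrightarrow> fst (Lr y) \<in> parts A ! l))))"
    using N unfolding nondet_one_path_def by blast
  then have "\<exists>Tr Lr. accepting_run A T Lab' Tr Lr \<and>
           (\<forall>k. (\<exists>!y. y \<in> Tr \<and> snd (Lr y) = \<pi> k) \<and>
                (\<forall>y\<in>Tr. snd (Lr y) = \<pi> k \<longrightarrow> fst (Lr y) \<in> parts A ! l))"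
    using L' \<pi> by blast
  then obtain Tr Lr where acc: "accepting_run A T Lab' Tr Lr"
    and inQ: "\<forall>k. \<forall>y\<in>Tr. snd (Lr y) = \<pi> k \<longrightarrow> fst (Lr y) \<in> ?Ql"
    by blast
  have run: "is_run A T Lab' Tr Lr" using acc unfolding accepting_run_def by blast
  have LabAP: "\<forall>w\<in>T. Lab w \<subseteq> AP - {p}" using kt unfolding kripke_tree_def by blast
  have "is_run ?E T Lab Tr Lr"
    unfolding is_run_def exC_simps
  proof (intro conjI ballI)
    show "is_tree Tr" "Lr [] = (init A, [])" using run unfolding is_run_def by auto
    fix y assume y: "y \<in> Tr"
    obtain I where I1: "\<forall>w'\<in>children T (snd (Lr y)). I w' \<subseteq> states A"
      and I2: "models (children T (snd (Lr y))) I (delta A (fst (Lr y)) (Lab' (snd (Lr y))))"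
      and I3: "Lr ` children Tr y = {(q', w'). w' \<in> children T (snd (Lr y)) \<and> q' \<in> I w'}"
      and I4: "Lr y \<in> states A \<times> T"
      using run y unfolding is_run_def by blast
    show "Lr y \<in> states A \<times> T" by fact
    define w where "w = snd (Lr y)"
    define q where "q = fst (Lr y)"
    have wT: "w \<in> T" using I4 w_def by auto
    have "models (children T w) I (if q \<in> ?Ql then Or (delta A q (Lab w)) (delta A q (insert p (Lab w)))
            else delta A q (Lab w))"
    proof (cases "w \<in> range \<pi>")
      case True
      then obtain k where "w = \<pi> k" by blast
      then have qQ: "q \<in> ?Ql" using inQ y w_def q_def by metis
      have "Lab' w - {p} = Lab w" using on wT True by blast
      moreover have "p \<notin> Lab w" using LabAP wT by blast
      ultimately have "Lab' w = Lab w \<or> Lab' w = insert p (Lab w)" by blast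
      moreover have m: "models (children T w) I (delta A q (Lab' w))" using I2 w_def q_def by simp
      ultimately have "models (children T w) I (Or (delta A q (Lab w)) (delta A q (insert p (Lab w))))"
        using models_Or_I1 models_Or_I2 by (elim disjE) simp_all
      then show ?thesis using qQ by simp
    next
      case False
      then have "Lab' w = Lab w" using off wT by blast
      moreover have m: "models (children T w) I (delta A q (Lab' w))" using I2 w_def q_def by simp
      ultimately show ?thesis using models_Or_I1 by (simp add: models_Or_I1)
    qed
    then show "\<exists>I. (\<forall>w'\<in>children T (snd (Lr y)). I w' \<subseteq> states A) \<and>
             models (children T (snd (Lr y))) I
              (if fst (Lr y) \<in> ?Ql then Or (delta A (fst (Lr y)) (Lab (snd (Lr y))))
                  (delta A (fst (Lr y)) (insert p (Lab (snd (Lr y))))) else delta A (fst (Lr y)) (Lab (snd (Lr y)))) \<and>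
             Lr ` children Tr y = {(q', w'). w' \<in> children T (snd (Lr y)) \<and> q' \<in> I w'}"
      using I1 I3 w_def q_def by blast
  qed
  then have "accepting_run ?E T Lab Tr Lr"
    using acc unfolding accepting_run_def exC_simps by blast
  moreover have "non_blocking T" using kt unfolding kripke_tree_def by blast
  moreover have "\<forall>w\<in>T. Lab w \<in> alph ?E" using LabAP unfolding exC_simps by blast
  ultimately show "x \<in> lang ?E" unfolding x lang_def by blast
qed

theorem proposition14:
  fixes AP :: "'ap set" and p :: 'ap and A :: "('ap set, 'q) hfta" and l :: nat
  assumes "finite AP" and "p \<in> AP"
    and "alph A = Pow AP"
    and "nondet_one_path A l TYPE('d)"
  shows "(lang (exC_aut AP p (parts A ! l) A) :: ('d list set \<times> ('d list \<Rightarrow> 'ap set)) set)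
           = chain_proj AP p (lang A)"
proof
  show "(lang (exC_aut AP p (parts A ! l) A) :: ('d list set \<times> ('d list \<Rightarrow> 'ap set)) set)
           \<subseteq> chain_proj AP p (lang A)"
  proof
    fix x :: "'d list set \<times> ('d list \<Rightarrow> 'ap set)"
    assume "x \<in> lang (exC_aut AP p (parts A ! l) A)"
    then obtain T Lab Tr Lr where x: "x = (T, Lab)" and nb: "non_blocking T"
      and lab: "\<forall>w\<in>T. Lab w \<in> alph (exC_aut AP p (parts A ! l) A)"
      and ac: "accepting_run (exC_aut AP p (parts A ! l) A) T Lab Tr Lr"
      unfolding lang_def by blast
    interpret D: D1 AP p A l T Lab Tr Lr
      apply unfold_locales
      using assms nb lab ac unfolding exC_simps by auto
    show "x \<in> chain_proj AP p (lang A)" using D.dir1_main x by simp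
  qed
  show "chain_proj AP p (lang A) \<subseteq>
     (lang (exC_aut AP p (parts A ! l) A) :: ('d list set \<times> ('d list \<Rightarrow> 'ap set)) set)"
    by (rule dir2[OF assms])
qed

end
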